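(* Let $A$ be a $\{0,1\}$-matrix and let $\mathcal{C}\subset B_*(X_A)$ be a right Markov code for $(X_A,\sigma_A)$. Suppose that $X_A$ has a fixed point $a^\infty=(a,a,a,\dots)\in X_A$ for some $a\in\Sigma_A$. Then for $m\ge1$, the word $a^m=a a\cdots a$ ($m$ letters) belongs to $\mathcal{C}$ if and only if $m=1$.
   Context: For an $N\times N$ matrix $A$ with entries in $\{0,1\}$, $\Sigma_A=\{1,\dots,N\}$, $X_A$ is the set of sequences $(x_n)_{n\in\mathbb{N}}$ in $\Sigma_A$ with $A(x_n,x_{n+1})=1$ for all $n$, with shift $\sigma_A((x_n)_n)=(x_{n+1})_n$. $B_k(X_A)$ is the set of admissible words of length $k$, $B_*(X_A)$ the union over $k\ge0$ (including the empty word). For a word $w=w_1\cdots w_\ell$, $\sigma_A(w)=w_2\cdots w_\ell$. A code is a nonempty $\mathcal{C}\subset B_*(X_A)$ such that any equality of concatenations $\omega(i_1)\cdots\omega(i_k)=\omega(j_1)\cdots\omega(j_n)$ of words of $\mathcal{C}$ forces $n=k$ and $\omega(i_m)=\omega(j_m)$ for all $m$; a prefix code is a code in which no word is a prefix of another. A finite prefix code $\mathcal{C}=\{\omega(1),\dots,\omega(M)\}\subset B_*(X_A)$, $\Sigma_{A(\mathcal{C})}=\{1,\dots,M\}$, is a right Markov code for $(X_A,\sigma_A)$ if: (i) for every $\gamma\in B_*(X_A)$ there is $\eta\in B_*(X_A)$ with $\gamma\eta\in B_*(X_A)$ and a unique finite sequence $(i_1,\dots,i_k)$ in $\Sigma_{A(\mathcal{C})}$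 with $\gamma\eta=\omega(i_1)\cdots\omega(i_k)$; (ii) there is $L\in\mathbb{N}$ such that for all $i_1,\dots,i_L$ with $\omega(i_1)\cdots\omega(i_L)\in B_*(X_A)$ there exist $j_1,\dots,j_k\in\Sigma_{A(\mathcal{C})}$ with $\sigma_A(\omega(i_1))\omega(i_2)\cdots\omega(i_L)=\omega(j_1)\cdots\omega(j_k)$; (iii) for every $i,j$ there are $n_1,\dots,n_l$ with $\omega(i)\omega(n_1)\cdots\omega(n_l)\omega(j)\in B_*(X_A)$. *)

theory Defs
  imports Main "HOL-Library.Sublist"
begin

text \<open>A {0,1}-matrix of size N x N is modelled as a function A :: nat => nat => nat,
  indexed by the alphabet Sigma_A = {1..N}. Words are lists over nat.\<close>

definition Sigma_A :: "nat \<Rightarrow> nat set" where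
  "Sigma_A N = {1..N}"

definition zero_one_matrix :: "nat \<Rightarrow> (nat \<Rightarrow> nat \<Rightarrow> nat) \<Rightarrow> bool" where
  "zero_one_matrix N A \<longleftrightarrow> (\<forall>i\<in>Sigma_A N. \<forall>j\<in>Sigma_A N. A i j \<in> {0, 1})"

definition X_A :: "nat \<Rightarrow> (nat \<Rightarrow> nat \<Rightarrow> nat) \<Rightarrow> (nat \<Rightarrow> nat) set" where
  "X_A N A = {x. (\<forall>n. x n \<in> Sigma_A N) \<and> (\<forall>n. A (x n) (x (Suc n)) = 1)}"

definition B_k :: "nat \<Rightarrow> (nat \<Rightarrow> nat \<Rightarrow> nat) \<Rightarrow> nat \<Rightarrow> nat list set" where
  "B_k N A k = {w. \<exists>x\<in>X_A N A. \<exists>i. w = map x [i..<i+k]}"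

definition B_star :: "nat \<Rightarrow> (nat \<Rightarrow> nat \<Rightarrow> nat) \<Rightarrow> nat list set" where
  "B_star N A = (\<Union>k. B_k N A k)"

definition sigma_word :: "nat list \<Rightarrow> nat list" where
  "sigma_word w = tl w"

definition is_code :: "nat \<Rightarrow> (nat \<Rightarrow> nat \<Rightarrow> nat) \<Rightarrow> nat list set \<Rightarrow> bool" where
  "is_code N A C \<longleftrightarrow> C \<noteq> {} \<and> C \<subseteq> B_star N A \<and>
     (\<forall>us vs. us \<noteq> [] \<longrightarrow> vs \<noteq> [] \<longrightarrow> set us \<subseteq> C \<longrightarrow> set vs \<subseteq> C \<longrightarrow>
        concat us = concat vs \<longrightarrow> us = vs)"

definition is_prefix_code :: "nat \<Rightarrow> (nat \<Rightarrow> nat \<Rightarrow> nat) \<Rightarrow> nat list set \<Rightarrow> bool" where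
  "is_prefix_code N A C \<longleftrightarrow> is_code N A C \<and>
     (\<forall>u\<in>C. \<forall>v\<in>C. prefix u v \<longrightarrow> u = v)"

definition right_markov_code :: "nat \<Rightarrow> (nat \<Rightarrow> nat \<Rightarrow> nat) \<Rightarrow> nat list set \<Rightarrow> bool" where
  "right_markov_code N A C \<longleftrightarrow> finite C \<and> is_prefix_code N A C \<and>
     \<comment> \<open>(i)\<close>
     (\<forall>\<gamma>\<in>B_star N A. \<exists>\<eta>\<in>B_star N A. \<gamma> @ \<eta> \<in> B_star N A \<and>
        (\<exists>!us. set us \<subseteq> C \<and> \<gamma> @ \<eta> = concat us)) \<and>
     \<comment> \<open>(ii)\<close>
     (\<exists>L::nat. L \<ge> 1 \<and> (\<forall>us. length us = L \<longrightarrow> set us \<subseteq> C \<longrightarrow> concat us \<in> B_star N A \<longrightarrow>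
        (\<exists>vs. set vs \<subseteq> C \<and> sigma_word (hd us) @ concat (tl us) = concat vs))) \<and>
     \<comment> \<open>(iii)\<close>
     (\<forall>u\<in>C. \<forall>v\<in>C. \<exists>ws. set ws \<subseteq> C \<and> u @ concat ws @ v \<in> B_star N A)"

end

theory Submission
  imports Defs
begin

lemma rep_in_B:
  assumes "(\<lambda>_. a) \<in> X_A N A"
  shows "replicate k a \<in> B_star N A"
proof -
  have "replicate k a = map (\<lambda>_. a) [0..<0+k]" by (simp add: map_replicate_const)
  then show ?thesis using assms unfolding B_star_def B_k_def by blast
qed

lemma nil_notin:
  assumes "is_code N A C"
  shows "[] \<notin> C"
proof
  assume h: "[] \<in> C"
  have "[[]] = [[],[]]"
  proof -
    have "\<forall>us vs. us \<noteq> [] \<longrightarrow> vs \<noteq> [] \<longrightarrow> set us \<subseteq> C \<longrightarrow> set vs \<subseteq> C \<longrightarrow>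
        concat us = concat vs \<longrightarrow> us = vs" using assms unfolding is_code_def by blast
    from this[rule_format, of "[[]]" "[[],[]]"] show ?thesis using h by simp
  qed
  then show False by simp
qed

lemma all_a: "set w \<subseteq> {a} \<Longrightarrow> w = replicate (length w) a"
  by (induct w) auto

lemma rep_prefix: "j \<le> m \<Longrightarrow> prefix (replicate j a) (replicate m a)"
proof -
  assume "j \<le> m"
  then have "replicate m a = replicate j a @ replicate (m-j) a"
    by (metis le_add_diff_inverse replicate_add)
  then show ?thesis unfolding prefix_def by blast
qed

lemma key:
  assumes pc: "is_prefix_code N A C" and am: "replicate m a \<in> C" and m: "m \<ge> 1"
  shows "set vs \<subseteq> C \<Longrightarrow> concat vs = replicate n a \<Longrightarrow> n = m * length vs"
proof (induct vs arbitrary: n)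
  case Nil
  then show ?case by simp
next
  case (Cons w ws)
  have wC: "w \<in> C" using Cons by simp
  have "is_code N A C" using pc unfolding is_prefix_code_def by blast
  then have ne: "w \<noteq> []" using nil_notin wC by blast
  have eq: "w @ concat ws = replicate n a" using Cons by simp
  have "set w \<subseteq> set (replicate n a)" using eq by (metis Un_upper1 set_append)
  then have "set w \<subseteq> {a}" by (auto simp: set_replicate_conv_if split: if_splits)
  then have ww: "w = replicate (length w) a" by (rule all_a)
  have pre: "\<forall>u\<in>C. \<forall>v\<in>C. prefix u v \<longrightarrow> u = v" using pc unfolding is_prefix_code_def by blast
  have "w = replicate m a"
  proof (cases "length w \<le> m")
    case True
    have "prefix w (replicate m a)" using rep_prefix[OF True, of a] ww by simp
    then show ?thesis using pre wC am by blast
  next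
    case False
    then have "m \<le> length w" by simp
    then have "prefix (replicate m a) w" using rep_prefix[of m "length w" a] ww by simp
    then show ?thesis using pre wC am by blast
  qed
  then have e2: "replicate m a @ concat ws = replicate n a" using eq by simp
  then have "length (replicate m a @ concat ws) = n" by simp
  then have "m \<le> n" by simp
  have "concat ws = drop m (replicate m a @ concat ws)" by simp
  also have "\<dots> = replicate (n - m) a" using e2 by simp
  finally have "concat ws = replicate (n - m) a" .
  then have "n - m = m * length ws" using Cons by simp
  then show ?case using \<open>m \<le> n\<close> by simp
qed

lemma concat_rep: "concat (replicate L (replicate m a)) = replicate (L*m) a"
  by (induct L) (auto simp: replicate_add)

theorem mainTheorem5:
  fixes N :: nat and A :: "nat \<Rightarrow> nat \<Rightarrow> nat" and C :: "nat list set" and a :: nat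
  assumes "zero_one_matrix N A"
    and "right_markov_code N A C"
    and "a \<in> Sigma_A N"
    and "(\<lambda>_. a) \<in> X_A N A"
  shows "\<forall>m::nat. m \<ge> 1 \<longrightarrow> (replicate m a \<in> C \<longleftrightarrow> m = 1)"
proof -
  note R = assms(2)[unfolded right_markov_code_def]
  have fin: "finite C" using R by (rule conjunct1)
  have pc: "is_prefix_code N A C" using R[THEN conjunct2] by (rule conjunct1)
  have cne: "C \<noteq> {}" using pc unfolding is_prefix_code_def is_code_def by (elim conjE)
  have "is_code N A C" using pc unfolding is_prefix_code_def by blast
  then have nil: "[] \<notin> C" using nil_notin by blast
  have pre: "\<forall>u\<in>C. \<forall>v\<in>C. prefix u v \<longrightarrow> u = v" using pc unfolding is_prefix_code_def by blast
  note Ri = R[THEN conjunct2, THEN conjunct2, THEN conjunct1]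
  note Rii = R[THEN conjunct2, THEN conjunct2, THEN conjunct2, THEN conjunct1]
  obtain L where L: "L \<ge> 1" and LL: "\<forall>us. length us = L \<longrightarrow> set us \<subseteq> C \<longrightarrow> concat us \<in> B_star N A \<longrightarrow>
        (\<exists>vs. set vs \<subseteq> C \<and> sigma_word (hd us) @ concat (tl us) = concat vs)"
    using Rii by blast
  have uniq: "m = 1" if am: "replicate m a \<in> C" and m: "m \<ge> 1" for m
  proof -
    let ?us = "replicate L (replicate m a)"
    have "set ?us \<subseteq> C" using am by (auto simp: set_replicate_conv_if)
    moreover have "concat ?us \<in> B_star N A" by (simp add: concat_rep rep_in_B[OF assms(4)])
    ultimately have "\<exists>vs. set vs \<subseteq> C \<and> sigma_word (hd ?us) @ concat (tl ?us) = concat vs"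
      using LL[rule_format, of ?us] by (simp only: length_replicate simp_thms)
    then obtain vs where vs: "set vs \<subseteq> C" "sigma_word (hd ?us) @ concat (tl ?us) = concat vs"
      by (elim exE conjE)
    have "sigma_word (hd ?us) @ concat (tl ?us) = replicate (m - 1) a @ replicate ((L-1)*m) a"
      using L by (cases L) (auto simp: sigma_word_def concat_rep)
    also have "\<dots> = replicate (m - 1 + (L-1)*m) a" by (simp add: replicate_add)
    also have "m - 1 + (L-1)*m = L*m - 1"
    proof -
      obtain L' where "L = Suc L'" using L by (cases L) auto
      then show ?thesis using m by simp
    qed
    finally have "L*m - 1 = m * length vs" using key[OF pc am m vs(1)] vs(2) by simp
    then have d1: "m dvd L*m - 1" by simp
    have "m dvd L*m" by simp
    then have "m dvd L*m - (L*m - 1)" by (rule dvd_diff_nat[OF _ d1])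
    moreover have "L*m - (L*m - 1) = 1"
    proof -
      have "L*m \<ge> 1" using L m by simp
      then show ?thesis by simp
    qed
    ultimately show ?thesis by simp
  qed
  define K where "K = Max (length ` C)"
  obtain w0 where w0: "w0 \<in> C" using cne by blast
  have "length w0 \<ge> 1" using w0 nil by (cases w0) auto
  have Kb: "length w \<le> K" if "w \<in> C" for w unfolding K_def using fin that by simp
  have K1: "K \<ge> 1" using Kb[OF w0] \<open>length w0 \<ge> 1\<close> by linarith
  have RK: "replicate K a \<in> B_star N A" using rep_in_B[OF assms(4)] .
  have "\<exists>\<eta>\<in>B_star N A. replicate K a @ \<eta> \<in> B_star N A \<and>
        (\<exists>!us. set us \<subseteq> C \<and> replicate K a @ \<eta> = concat us)" by (rule bspec[OF Ri RK])
  then obtain \<eta> where "replicate K a @ \<eta> \<in> B_star N A \<and>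
        (\<exists>!us. set us \<subseteq> C \<and> replicate K a @ \<eta> = concat us)" by (elim bexE)
  then have "\<exists>us. set us \<subseteq> C \<and> replicate K a @ \<eta> = concat us" by (elim conjE ex1_implies_ex)
  then obtain us where us: "set us \<subseteq> C" "replicate K a @ \<eta> = concat us"
    by (elim exE conjE)
  then obtain w ws where uw: "us = w # ws" using K1 by (cases us) auto
  have wC: "w \<in> C" using us uw by simp
  have eq: "w @ concat ws = replicate K a @ \<eta>" using us uw by simp
  have "take (length w) (w @ concat ws) = take (length w) (replicate K a @ \<eta>)" using eq by simp
  then have "w = take (length w) (replicate K a @ \<eta>)" by simp
  also have "\<dots> = replicate (length w) a" using Kb[OF wC] by simp
  finally have ex: "replicate (length w) a \<in> C" using wC by simp
  have "length w \<ge> 1" using wC nil by (cases w) auto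
  then have "length w = 1" by (rule uniq[OF ex])
  then have a1: "replicate 1 a \<in> C" using ex by simp
  show ?thesis using uniq a1 by blast
qed

end
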